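(* Let $A\in\mathbb R^{n\times n}$ and, for $W\succ0$, define $$v^*(A,W)=\inf_{P,\Pi}\ \tfrac12\log\det\Pi^{-1}+\tfrac12\log\det W\quad\text{s.t.}\quad\Pi\succ0,\ P\preceq APA^\top+W,\ \begin{bmatrix}P-\Pi & PA^\top\\ AP & APA^\top+W\end{bmatrix}\succeq0,$$ over symmetric $n\times n$ matrices $P,\Pi$. If $0\prec W_1\preceq W_2$, then $v^*(A,W_1)\le v^*(A,W_2)$.
   Context: Logarithms are base 2. *)

theory Defs
  imports "HOL-Analysis.Analysis" "HOL-Library.Extended_Real"
begin

definition symmetric_mat :: "real^'n^'n \<Rightarrow> bool" where
  "symmetric_mat M \<longleftrightarrow> transpose M = M"

definition psd :: "real^'n^'n \<Rightarrow> bool" where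
  "psd M \<longleftrightarrow> symmetric_mat M \<and> (\<forall>x. 0 \<le> x \<bullet> (M *v x))"

definition pd :: "real^'n^'n \<Rightarrow> bool" where
  "pd M \<longleftrightarrow> symmetric_mat M \<and> (\<forall>x. x \<noteq> 0 \<longrightarrow> 0 < x \<bullet> (M *v x))"

definition loewner_le :: "real^'n^'n \<Rightarrow> real^'n^'n \<Rightarrow> bool" where
  "loewner_le M N \<longleftrightarrow> psd (N - M)"

definition block_mat :: "real^'n^'n \<Rightarrow> real^'n^'n \<Rightarrow> real^'n^'n \<Rightarrow> real^'n^'n
    \<Rightarrow> real^('n + 'n)^('n + 'n)" where
  "block_mat B11 B12 B21 B22 = (\<chi> i j.
     (case i of
        Inl i' \<Rightarrow> (case j of Inl j' \<Rightarrow> B11 $ i' $ j' | Inr j' \<Rightarrow> B12 $ i' $ j')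
      | Inr i' \<Rightarrow> (case j of Inl j' \<Rightarrow> B21 $ i' $ j' | Inr j' \<Rightarrow> B22 $ i' $ j')))"

definition feasible :: "real^'n^'n \<Rightarrow> real^'n^'n \<Rightarrow> ((real^'n^'n) \<times> (real^'n^'n)) set" where
  "feasible A W = {(P, Q). symmetric_mat P \<and> symmetric_mat Q \<and> pd Q \<and>
      loewner_le P (A ** P ** transpose A + W) \<and>
      psd (block_mat (P - Q) (P ** transpose A) (A ** P) (A ** P ** transpose A + W))}"

text \<open>Optimal value (logarithms base 2); infimum in the extended reals
  (+\<infinity> if infeasible).\<close>
definition vstar :: "real^'n^'n \<Rightarrow> real^'n^'n \<Rightarrow> ereal" where
  "vstar A W = (INF PP \<in> feasible A W.
      ereal ((1/2) * log 2 (det (matrix_inv (snd PP))) + (1/2) * log 2 (det W)))"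

end

theory Submission
  imports Defs
begin


lemma inner_mv: "(M *v x) \<bullet> (y::real^'n) = x \<bullet> (transpose M *v y)"
  by (metis dot_lmul_matrix vector_transpose_matrix)

lemma sym_inner: "symmetric_mat M \<Longrightarrow> (M *v x) \<bullet> (y::real^'n) = x \<bullet> (M *v y)"
  by (simp add: inner_mv symmetric_mat_def)

lemma inv_props:
  fixes A :: "real^'n^'n"
  assumes "invertible A"
  shows "A ** matrix_inv A = mat 1" "matrix_inv A ** A = mat 1"
proof -
  have "\<exists>A'. A ** A' = mat 1 \<and> A' ** A = mat 1" using assms invertible_def by blast
  hence "A ** matrix_inv A = mat 1 \<and> matrix_inv A ** A = mat 1"
    unfolding matrix_inv_def by (rule someI_ex)
  thus "A ** matrix_inv A = mat 1" "matrix_inv A ** A = mat 1" by auto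
qed

lemma inv_unique:
  fixes A B :: "real^'n^'n"
  assumes "A ** B = mat 1"
  shows "matrix_inv A = B" "invertible A"
proof -
  have i: "invertible A" using assms invertible_right_inverse by blast
  have "matrix_inv A = matrix_inv A ** (A ** B)" using assms by simp
  also have "\<dots> = B" by (simp add: matrix_mul_assoc inv_props[OF i])
  finally show "matrix_inv A = B" .
  show "invertible A" by fact
qed

lemma invertible_inv: "invertible (A::real^'n^'n) \<Longrightarrow> invertible (matrix_inv A)"
  using inv_props invertible_def by blast

lemma inv_inv: "invertible (A::real^'n^'n) \<Longrightarrow> matrix_inv (matrix_inv A) = A"
  using inv_props(2) inv_unique(1) by blast

lemma transpose_inv:
  fixes A :: "real^'n^'n"
  assumes "invertible A"
  shows "transpose (matrix_inv A) = matrix_inv (transpose A)"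
proof -
  have "transpose A ** transpose (matrix_inv A) = mat 1"
    by (metis inv_props(2)[OF assms] matrix_transpose_mul transpose_mat)
  thus ?thesis using inv_unique(1) by metis
qed

lemma sym_inv: "invertible A \<Longrightarrow> symmetric_mat A \<Longrightarrow> symmetric_mat (matrix_inv (A::real^'n^'n))"
  by (simp add: symmetric_mat_def transpose_inv)

lemma inv_mult:
  fixes A B :: "real^'n^'n"
  assumes "invertible A" "invertible B"
  shows "matrix_inv (A ** B) = matrix_inv B ** matrix_inv A"
proof -
  have "(A ** B) ** (matrix_inv B ** matrix_inv A) = A ** (B ** matrix_inv B) ** matrix_inv A"
    by (simp add: matrix_mul_assoc)
  also have "\<dots> = mat 1" by (simp add: inv_props assms)
  finally have "(A ** B) ** (matrix_inv B ** matrix_inv A) = mat 1" .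
  thus ?thesis by (rule inv_unique)
qed

lemma det_inv: "invertible (A::real^'n^'n) \<Longrightarrow> det (matrix_inv A) = 1 / det A"
  by (metis det_I det_mul inv_props(1) invertible_det_nz nonzero_eq_divide_eq mult.commute)

lemma inj_invertible: "(\<And>x. (A::real^'n^'n) *v x = 0 \<Longrightarrow> x = 0) \<Longrightarrow> invertible A"
  by (metis invertible_left_inverse matrix_left_invertible_injective vec.inj_iff_eq_0)

lemma pd_invertible: "pd A \<Longrightarrow> invertible A"
  by (rule inj_invertible) (force simp: pd_def)

lemma transpose_add: "transpose (A + B) = transpose A + transpose (B :: real^'n^'m)"
  by (simp add: transpose_def vec_eq_iff)
lemma transpose_diff: "transpose (A - B) = transpose A - transpose (B :: real^'n^'m)"
  by (simp add: transpose_def vec_eq_iff)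

lemma mm_add_r: "((A::real^'n^'m) + B) ** (C::real^'p^'n) = A ** C + B ** C"
  by (simp add: matrix_matrix_mult_def vec_eq_iff sum.distrib distrib_right)
lemma mm_diff_r: "((A::real^'n^'m) - B) ** (C::real^'p^'n) = A ** C - B ** C"
  by (simp add: matrix_matrix_mult_def vec_eq_iff sum_subtractf left_diff_distrib)
lemma mm_diff_l: "(A::real^'n^'m) ** ((B::real^'p^'n) - C) = A ** B - A ** C"
  by (simp add: matrix_matrix_mult_def vec_eq_iff sum_subtractf right_diff_distrib)
lemma mm_scale_l: "(c *\<^sub>R (A::real^'n^'m)) ** (B::real^'p^'n) = c *\<^sub>R (A ** B)"
  by (simp add: matrix_matrix_mult_def vec_eq_iff sum_distrib_left mult.assoc)
lemma mm_scale_r: "(A::real^'n^'m) ** (c *\<^sub>R (B::real^'p^'n)) = c *\<^sub>R (A ** B)"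
  by (simp add: matrix_matrix_mult_def vec_eq_iff sum_distrib_left mult.left_commute)
lemma mv_scale_mat: "(t *\<^sub>R mat 1) *v (x::real^'n) = t *\<^sub>R x"
  by (metis matrix_vector_mul_lid scaleR_matrix_vector_assoc)

section \<open>Polynomial functions\<close>

definition polyfun :: "(real \<Rightarrow> real) \<Rightarrow> bool" where
  "polyfun f \<longleftrightarrow> (\<exists>q. \<forall>t. f t = poly q t)"

lemma polyfun_const: "polyfun (\<lambda>t. c)"
  unfolding polyfun_def by (rule exI[of _ "[:c:]"]) simp
lemma polyfun_id: "polyfun (\<lambda>t. t)"
  unfolding polyfun_def by (rule exI[of _ "[:0,1:]"]) simp
lemma polyfun_add: "polyfun f \<Longrightarrow> polyfun g \<Longrightarrow> polyfun (\<lambda>t. f t + g t)"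
  unfolding polyfun_def by (metis poly_add)
lemma polyfun_mult: "polyfun f \<Longrightarrow> polyfun g \<Longrightarrow> polyfun (\<lambda>t. f t * g t)"
  unfolding polyfun_def by (metis poly_mult)
lemma polyfun_diff: "polyfun f \<Longrightarrow> polyfun g \<Longrightarrow> polyfun (\<lambda>t. f t - g t)"
  unfolding polyfun_def by (metis poly_diff)
lemma polyfun_sum: "(\<And>i. i \<in> S \<Longrightarrow> polyfun (f i)) \<Longrightarrow> polyfun (\<lambda>t. \<Sum>i\<in>S. f i t)"
proof (induction S rule: infinite_finite_induct)
  case (insert x F) thus ?case by (simp add: polyfun_add)
qed (simp_all add: polyfun_const)
lemma polyfun_prod: "(\<And>i. i \<in> S \<Longrightarrow> polyfun (f i)) \<Longrightarrow> polyfun (\<lambda>t. \<Prod>i\<in>S. f i t)"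
proof (induction S rule: infinite_finite_induct)
  case (insert x F) thus ?case by (simp add: polyfun_mult)
qed (simp_all add: polyfun_const)

lemma polyfun_det:
  fixes F :: "real \<Rightarrow> real^'n^'n"
  assumes "\<And>i j. polyfun (\<lambda>t. F t $ i $ j)"
  shows "polyfun (\<lambda>t. det (F t))"
  unfolding det_def
  by (intro polyfun_sum polyfun_mult polyfun_prod polyfun_const assms)

lemma polyfun_eq:
  assumes "polyfun f" "polyfun g" "infinite {t. f t = g t}"
  shows "f x = g x"
proof -
  obtain p q where p: "\<And>t. f t = poly p t" and q: "\<And>t. g t = poly q t"
    using assms unfolding polyfun_def by metis
  have eq: "{t. f t = g t} = {t. poly (p - q) t = 0}" by (auto simp: p q)
  have "p - q = 0"
  proof (rule ccontr)
    assume "p - q \<noteq> 0"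
    hence "finite {t. poly (p - q) t = 0}" by (rule poly_roots_finite)
    with eq assms(3) show False by simp
  qed
  thus ?thesis by (simp add: p q)
qed

lemma eventually_invertible:
  fixes X :: "real^'n^'n"
  obtains K where "\<And>t. t > K \<Longrightarrow> invertible (X + t *\<^sub>R mat 1)"
proof -
  obtain K where K: "K > 0" "\<And>x. norm (X *v x) \<le> norm x * K"
    using bounded_linear.pos_bounded[OF matrix_vector_mul_bounded_linear[of X]] by blast
  have "invertible (X + t *\<^sub>R mat 1)" if "t > K" for t
  proof (rule inj_invertible)
    fix x assume "(X + t *\<^sub>R mat 1) *v x = 0"
    hence "X *v x = - (t *\<^sub>R x)"
      by (simp add: matrix_vector_mult_add_rdistrib mv_scale_mat eq_neg_iff_add_eq_0)
    hence "t * norm x \<le> norm x * K" using K(2)[of x] that K by simp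
    hence "(t - K) * norm x \<le> 0" by (simp add: algebra_simps)
    moreover have "t - K > 0" using that by simp
    ultimately have "norm x \<le> 0" by (simp add: mult_le_0_iff)
    thus "x = 0" by simp
  qed
  thus ?thesis using that by blast
qed

lemma polyfun_mat_entry1:
  fixes X Y :: "real^'n^'n"
  shows "polyfun (\<lambda>t. (mat 1 + (X + t *\<^sub>R mat 1) ** Y) $ i $ j)"
  apply (simp add: matrix_matrix_mult_def mat_def split del: if_split)
  apply (intro polyfun_add polyfun_sum polyfun_mult polyfun_const polyfun_id)
  done
lemma polyfun_mat_entry2:
  fixes X Y :: "real^'n^'n"
  shows "polyfun (\<lambda>t. (mat 1 + Y ** (X + t *\<^sub>R mat 1)) $ i $ j)"
  apply (simp add: matrix_matrix_mult_def mat_def split del: if_split)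
  apply (intro polyfun_add polyfun_sum polyfun_mult polyfun_const polyfun_id)
  done

lemma swap_id: "(Z::real^'n^'n) ** (mat 1 + Y ** Z) = (mat 1 + Z ** Y) ** Z"
  by (simp only: matrix_add_ldistrib mm_add_r matrix_mul_assoc matrix_mul_lid matrix_mul_rid)

theorem sylvester:
  fixes X Y :: "real^'n^'n"
  shows "det (mat 1 + X ** Y) = det (mat 1 + Y ** X)"
proof -
  let ?Z = "\<lambda>t. X + t *\<^sub>R mat 1"
  let ?f = "\<lambda>t. det (mat 1 + ?Z t ** Y)" and ?g = "\<lambda>t. det (mat 1 + Y ** ?Z t)"
  obtain K where K: "\<And>t. t > K \<Longrightarrow> invertible (?Z t)" using eventually_invertible by blast
  have "{K<..} \<subseteq> {t. ?f t = ?g t}"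
  proof
    fix t assume "t \<in> {K<..}"
    hence inv: "invertible (?Z t)" using K by auto
    have "?Z t ** (mat 1 + Y ** ?Z t) = (mat 1 + ?Z t ** Y) ** ?Z t"
      by (rule swap_id)
    hence "det (?Z t) * ?g t = ?f t * det (?Z t)" by (metis det_mul)
    moreover have "det (?Z t) \<noteq> 0" using inv invertible_det_nz by blast
    ultimately show "t \<in> {t. ?f t = ?g t}" by simp
  qed
  hence inf: "infinite {t. ?f t = ?g t}" using infinite_Ioi finite_subset by blast
  have pf: "polyfun ?f" by (rule polyfun_det, rule polyfun_mat_entry1)
  have pg: "polyfun ?g" by (rule polyfun_det, rule polyfun_mat_entry2)
  have "?f 0 = ?g 0" by (rule polyfun_eq[OF pf pg inf])
  thus ?thesis by simp
qed



section \<open>Spectral theorem\<close>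


lemma quad_expand:
  fixes M :: "real^'n^'n"
  assumes "symmetric_mat M"
  shows "(x + t *\<^sub>R y) \<bullet> (M *v (x + t *\<^sub>R y)) =
         x \<bullet> (M *v x) + 2 * t * (y \<bullet> (M *v x)) + t\<^sup>2 * (y \<bullet> (M *v y))"
proof -
  have "x \<bullet> (M *v y) = y \<bullet> (M *v x)"
    using sym_inner[OF assms, of y x] by (simp add: inner_commute)
  thus ?thesis
    by (simp add: matrix_vector_right_distrib matrix_vector_mult_scaleR inner_add_left inner_add_right
        algebra_simps power2_eq_square)
qed

lemma quad_zero_coeff:
  fixes a b :: real
  assumes "\<And>t. 2 * t * a + t\<^sup>2 * b \<le> 0"
  shows "a = 0"
proof -
  define s where "s = 1 / (\<bar>b\<bar> + 1)"
  have s: "s > 0" "s * \<bar>b\<bar> < 1" unfolding s_def by (auto simp: field_simps)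
  have "2 * (s * a) * a + (s * a)\<^sup>2 * b \<le> 0" using assms .
  hence "a\<^sup>2 * (s * (2 + s * b)) \<le> 0" by (simp add: algebra_simps power2_eq_square)
  moreover have "s * (- \<bar>b\<bar>) \<le> s * b" using s(1) by (intro mult_left_mono) auto
  hence "s * b \<ge> - (s * \<bar>b\<bar>)" by simp
  hence "2 + s * b > 0" using s by linarith
  hence "s * (2 + s * b) > 0" using s by simp
  ultimately show "a = 0"
  proof (rule_tac ccontr)
    assume h: "a\<^sup>2 * (s * (2 + s * b)) \<le> 0" "s * (2 + s * b) > 0" "a \<noteq> 0"
    hence "a\<^sup>2 > 0" by simp
    hence "a\<^sup>2 * (s * (2 + s * b)) > 0" using h(2) by (rule mult_pos_pos)
    thus False using h(1) by simp
  qed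
qed

lemma eigvec_exists:
  fixes M :: "real^'n^'n"
  assumes sym: "symmetric_mat M" and S: "subspace S" "S \<noteq> {0}"
    and inv: "\<And>x. x \<in> S \<Longrightarrow> M *v x \<in> S"
  shows "\<exists>x\<in>S. norm x = 1 \<and> M *v x = (x \<bullet> (M *v x)) *\<^sub>R x"
proof -
  let ?q = "\<lambda>x. x \<bullet> (M *v x)"
  let ?K = "sphere 0 1 \<inter> S"
  have cK: "compact ?K" by (intro compact_Int_closed compact_sphere closed_subspace S)
  obtain y where y: "y \<in> S" "y \<noteq> 0" using S subspace_0 by blast
  have "(1 / norm y) *\<^sub>R y \<in> ?K" using y S by (simp add: subspace_scale)
  hence neK: "?K \<noteq> {}" by blast
  have cq: "continuous_on ?K ?q"
    by (intro continuous_intros continuous_on_inner linear_continuous_on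
        matrix_vector_mul_bounded_linear)
  obtain x where x: "x \<in> ?K" "\<And>z. z \<in> ?K \<Longrightarrow> ?q z \<le> ?q x"
    using continuous_attains_sup[OF cK neK cq] by blast
  define l where "l = ?q x"
  have nx: "norm x = 1" "x \<in> S" using x by auto
  have bound: "?q v \<le> l * (norm v)\<^sup>2" if "v \<in> S" for v
  proof (cases "v = 0")
    case False
    let ?u = "(1 / norm v) *\<^sub>R v"
    define c where "c = 1 / norm v"
    have "c *\<^sub>R v \<in> ?K" using that False S by (simp add: subspace_scale c_def)
    hence "?q (c *\<^sub>R v) \<le> l" using x(2) l_def by blast
    moreover have "?q (c *\<^sub>R v) = c * c * ?q v"
      by (simp only: matrix_vector_mult_scaleR inner_scaleR_left inner_scaleR_right mult.assoc)
    ultimately have "(norm v)\<^sup>2 * (c * c * ?q v) \<le> (norm v)\<^sup>2 * l"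
      by (metis mult_left_mono zero_le_power2)
    moreover have "norm v * c = 1" using False c_def by simp
    hence "(norm v)\<^sup>2 * (c * c * ?q v) = ?q v"
      by (simp add: power2_eq_square) (metis mult.assoc mult.left_commute mult_1 )
    ultimately show ?thesis by (simp add: mult.commute)
  qed simp
  have key: "y \<bullet> (M *v x) = l * (x \<bullet> y)" if "y \<in> S" for y
  proof -
    have "2 * t * (y \<bullet> (M *v x) - l * (x \<bullet> y)) + t\<^sup>2 * (?q y - l * (norm y)\<^sup>2) \<le> 0" for t
    proof -
      have "x + t *\<^sub>R y \<in> S" using S that nx by (simp add: subspace_add subspace_scale)
      hence "?q (x + t *\<^sub>R y) \<le> l * (norm (x + t *\<^sub>R y))\<^sup>2" by (rule bound)
      moreover have "(norm (x + t *\<^sub>R y))\<^sup>2 = 1 + 2 * t * (x \<bullet> y) + t\<^sup>2 * (norm y)\<^sup>2"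
      proof -
        have "(norm (x + t *\<^sub>R y))\<^sup>2 = (x + t *\<^sub>R y) \<bullet> (x + t *\<^sub>R y)"
          by (rule power2_norm_eq_inner)
        also have "\<dots> = x \<bullet> x + 2 * t * (x \<bullet> y) + t\<^sup>2 * (y \<bullet> y)"
          by (simp add: inner_add_left inner_add_right inner_commute algebra_simps power2_eq_square)
        also have "x \<bullet> x = 1" using nx(1) by (simp add: norm_eq_1)
        also have "y \<bullet> y = (norm y)\<^sup>2" by (simp add: power2_norm_eq_inner)
        finally show ?thesis .
      qed
      ultimately show ?thesis using quad_expand[OF sym, of x t y] l_def by (simp add: algebra_simps)
    qed
    thus ?thesis using quad_zero_coeff by fastforce
  qed
  let ?y = "M *v x - l *\<^sub>R x"
  have "?y \<in> S" using S nx inv by (simp add: subspace_diff subspace_scale)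
  hence "?y \<bullet> (M *v x) = l * (x \<bullet> ?y)" by (rule key)
  moreover have "?y \<bullet> ?y = ?y \<bullet> (M *v x) - l * (?y \<bullet> x)" by (simp add: inner_diff_right)
  ultimately have "?y \<bullet> ?y = 0" by (simp add: inner_commute)
  hence "M *v x = l *\<^sub>R x" by simp
  thus ?thesis using nx l_def by blast
qed

lemma eigenbasis_subspace:
  fixes M :: "real^'n^'n"
  assumes sym: "symmetric_mat M"
  shows "subspace S \<Longrightarrow> (\<And>x. x \<in> S \<Longrightarrow> M *v x \<in> S) \<Longrightarrow>
    \<exists>B. B \<subseteq> S \<and> pairwise orthogonal B \<and> (\<forall>b\<in>B. norm b = 1 \<and> M *v b = (b \<bullet> (M *v b)) *\<^sub>R b)
       \<and> span B = S"
proof (induction "dim S" arbitrary: S rule: less_induct)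
  case less
  show ?case
  proof (cases "S = {0}")
    case True thus ?thesis by (intro exI[of _ "{}"]) (auto simp: pairwise_def)
  next
    case False
    obtain x where x: "x \<in> S" "norm x = 1" "M *v x = (x \<bullet> (M *v x)) *\<^sub>R x"
      using eigvec_exists[OF sym less.prems(1) False less.prems(2)] by blast
    define l where "l = x \<bullet> (M *v x)"
    let ?S' = "S \<inter> {v. x \<bullet> v = 0}"
    have sub': "subspace ?S'" using less.prems(1) subspace_hyperplane subspace_inter by blast
    have inv': "M *v v \<in> ?S'" if "v \<in> ?S'" for v
    proof -
      have "x \<bullet> (M *v v) = (M *v x) \<bullet> v" using sym_inner[OF sym] by simp
      also have "\<dots> = (l *\<^sub>R x) \<bullet> v" using x(3) l_def by metis
      also have "\<dots> = l * (x \<bullet> v)" by simp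
      finally show ?thesis using that less.prems(2) by auto
    qed
    have "x \<bullet> x = 1" using x(2) by (simp add: norm_eq_1)
    hence xn: "x \<notin> ?S'" by auto
    have "?S' \<subset> S" using x(1) xn by blast
    moreover have e1: "span ?S' = ?S'" using sub' by (simp add: span_eq_iff)
    moreover have e2: "span S = S" using less.prems(1) by (simp add: span_eq_iff)
    ultimately have "span ?S' \<subset> span S" by (simp only: e1 e2)
    hence "dim ?S' < dim S" by (rule dim_psubset)
    then obtain B' where B': "B' \<subseteq> ?S'" "pairwise orthogonal B'"
      "\<forall>b\<in>B'. norm b = 1 \<and> M *v b = (b \<bullet> (M *v b)) *\<^sub>R b" "span B' = ?S'"
      using less.hyps[OF _ sub' inv'] by blast
    let ?B = "insert x B'"
    have "?B \<subseteq> S" using B'(1) x(1) by auto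
    moreover have "pairwise orthogonal ?B"
      using B'(1,2) xn by (auto simp: pairwise_insert orthogonal_def inner_commute)
    moreover have "\<forall>b\<in>?B. norm b = 1 \<and> M *v b = (b \<bullet> (M *v b)) *\<^sub>R b" using B'(3) x by auto
    moreover have "span ?B = S"
    proof
      show "span ?B \<subseteq> S" using \<open>?B \<subseteq> S\<close> less.prems(1) by (rule span_minimal)
      show "S \<subseteq> span ?B"
      proof
        fix v assume v: "v \<in> S"
        let ?w = "v - (x \<bullet> v) *\<^sub>R x"
        have "x \<bullet> ?w = 0" using \<open>x \<bullet> x = 1\<close> by (simp add: inner_diff_right)
        hence "?w \<in> span B'" using B'(4) v x(1) less.prems(1) by (simp add: subspace_diff subspace_scale)
        hence "?w \<in> span ?B" by (meson span_mono subset_insertI subsetD)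
        moreover have "(x \<bullet> v) *\<^sub>R x \<in> span ?B" by (simp add: span_base span_scale)
        ultimately have "?w + (x \<bullet> v) *\<^sub>R x \<in> span ?B" by (rule span_add)
        thus "v \<in> span ?B" by simp
      qed
    qed
    ultimately show ?thesis by blast
  qed
qed

definition diag :: "('n \<Rightarrow> real) \<Rightarrow> real^'n^'n" where
  "diag d = (\<chi> i j. if i = j then d i else 0)"

theorem spectral:
  fixes M :: "real^'n^'n"
  assumes sym: "symmetric_mat M"
  shows "\<exists>(U::real^'n^'n) d. transpose U ** U = mat 1 \<and> U ** transpose U = mat 1 \<and>
           M = U ** diag d ** transpose U \<and> (\<forall>j. d j = column j U \<bullet> (M *v column j U))"
proof -
  obtain B where B: "pairwise orthogonal B" "\<forall>b\<in>B. norm b = 1 \<and> M *v b = (b \<bullet> (M *v b)) *\<^sub>R b"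
      "span B = UNIV"
    using eigenbasis_subspace[OF sym, of UNIV] subspace_UNIV by blast
  have "0 \<notin> B" using B(2) by auto
  hence ind: "independent B" using B(1) pairwise_orthogonal_independent by blast
  hence "card B = dim (UNIV :: (real^'n) set)" using B(3) basis_card_eq_dim by blast
  hence cB: "card B = CARD('n)" by simp
  have fB: "finite B" using ind independent_bound by blast
  obtain f where f: "bij_betw f (UNIV::'n set) B"
    using finite_same_card_bij[OF _ fB, of "UNIV::'n set"] cB by auto
  define U :: "real^'n^'n" where "U = (\<chi> i j. f j $ i)"
  define d where "d j = f j \<bullet> (M *v f j)" for j
  have col: "column j U = f j" for j by (simp add: column_def U_def vec_eq_iff)
  have fin: "f j \<in> B" for j using f bij_betw_apply by fastforce
  have orth: "f i \<bullet> f j = (if i = j then 1 else 0)" for i j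
  proof (cases "i = j")
    case True thus ?thesis using fin B(2) by (simp add: norm_eq_1)
  next
    case False
    hence "f i \<noteq> f j" using f by (metis UNIV_I bij_betw_inv_into_left)
    thus ?thesis using B(1) fin False unfolding pairwise_def orthogonal_def by auto
  qed
  have UtU: "transpose U ** U = mat 1"
    using orth by (simp add: matrix_matrix_mult_def transpose_def U_def mat_def vec_eq_iff inner_vec_def)
  hence UUt: "U ** transpose U = mat 1" using matrix_left_right_inverse by blast
  have MU: "M ** U = U ** diag d"
  proof -
    have "(M ** U) $ i $ j = (U ** diag d) $ i $ j" for i j
    proof -
      have "(M ** U) $ i $ j = (M *v f j) $ i"
        by (simp add: matrix_matrix_mult_def matrix_vector_mult_def U_def)
      also have "M *v f j = d j *\<^sub>R f j" using B(2) fin d_def by auto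
      also have "(d j *\<^sub>R f j) $ i = d j * f j $ i" by simp
      also have "\<dots> = (U ** diag d) $ i $ j"
        by (simp add: matrix_matrix_mult_def diag_def U_def if_distrib cong: if_cong)
      finally show ?thesis .
    qed
    thus ?thesis by (simp add: vec_eq_iff)
  qed
  have "M = M ** U ** transpose U" using UUt by (simp add: matrix_mul_assoc[symmetric])
  also have "\<dots> = U ** diag d ** transpose U" using MU by simp
  finally have M: "M = U ** diag d ** transpose U" .
  have D: "\<forall>j. d j = column j U \<bullet> (M *v column j U)" using col d_def by simp
  show ?thesis
    by (rule exI[where x=U], rule exI[where x=d], intro conjI UtU UUt M D)
qed



lemma diag_mult: "diag a ** diag b = diag (\<lambda>i. a i * b i)"
proof -
  have "(diag a ** diag b) $ i $ j = diag (\<lambda>i. a i * b i) $ i $ j" for i j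
  proof -
    have e: "(\<lambda>k. (if i = k then a i else 0) * (if k = j then b k else 0)) =
          (\<lambda>k. if k = i then (if i = j then a i * b i else 0) else 0)" by auto
    have "(diag a ** diag b) $ i $ j = (\<Sum>k\<in>UNIV. (if i = k then a i else 0) * (if k = j then b k else 0))"
      by (simp add: diag_def matrix_matrix_mult_def)
    also have "\<dots> = (\<Sum>k\<in>UNIV. if k = i then (if i = j then a i * b i else 0) else 0)"
      by (simp only: e)
    also have "\<dots> = (if i = j then a i * b i else 0)" by simp
    also have "\<dots> = diag (\<lambda>i. a i * b i) $ i $ j" by (simp add: diag_def)
    finally show ?thesis .
  qed
  thus ?thesis by (simp add: vec_eq_iff)
qed

lemma transpose_diag: "transpose (diag d) = diag d"
  by (simp add: diag_def transpose_def vec_eq_iff)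

lemma det_diag: "det (diag d) = prod d UNIV"
  by (subst det_diagonal) (auto simp: diag_def)

lemma det_conj:
  fixes U :: "real^'n^'n"
  assumes "transpose U ** U = mat 1"
  shows "det (U ** D ** transpose U) = det D"
proof -
  have "det (U ** D ** transpose U) = det D * (det (transpose U) * det U)"
    by (simp add: det_mul)
  also have "det (transpose U) * det U = 1" using assms by (metis det_I det_mul)
  finally show ?thesis by simp
qed

lemma col_norm:
  fixes U :: "real^'n^'n"
  assumes "transpose U ** U = mat 1"
  shows "column j U \<bullet> column j U = 1"
proof -
  have "(transpose U ** U) $ j $ j = 1" using assms by (simp add: mat_def)
  thus ?thesis by (simp add: matrix_matrix_mult_def transpose_def column_def inner_vec_def)
qed

lemma det_pd_pos: "pd (M::real^'n^'n) \<Longrightarrow> det M > 0"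
proof -
  assume pdM: "pd M"
  then obtain U :: "real^'n^'n" and d where U: "transpose U ** U = mat 1"
    "M = U ** diag d ** transpose U" "\<forall>j. d j = column j U \<bullet> (M *v column j U)"
    using spectral pd_def by blast
  have "d j > 0" for j
  proof -
    have "column j U \<noteq> 0" using col_norm[OF U(1), of j] by auto
    thus ?thesis using pdM U(3) unfolding pd_def by auto
  qed
  hence "prod d UNIV > 0" by (simp add: prod_pos)
  thus ?thesis using U det_conj det_diag by metis
qed

lemma det_ge1:
  fixes N :: "real^'n^'n"
  assumes "symmetric_mat N" "\<And>x. x \<bullet> x \<le> x \<bullet> (N *v x)"
  shows "det N \<ge> 1"
proof -
  obtain U :: "real^'n^'n" and d where U: "transpose U ** U = mat 1"
    "N = U ** diag d ** transpose U" "\<forall>j. d j = column j U \<bullet> (N *v column j U)"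
    using spectral assms(1) by blast
  have "d j \<ge> 1" for j using assms(2)[of "column j U"] col_norm[OF U(1), of j] U(3) by simp
  hence "prod d UNIV \<ge> 1" by (simp add: prod_ge_1)
  thus ?thesis using U det_conj det_diag by metis
qed

lemma det_I_plus_psd: "psd (M::real^'n^'n) \<Longrightarrow> det (mat 1 + M) \<ge> 1"
  by (rule det_ge1) (auto simp: psd_def symmetric_mat_def transpose_add matrix_vector_mult_add_rdistrib
      inner_add_right)

lemma pd_sqrt:
  fixes M :: "real^'n^'n"
  assumes "pd M"
  shows "\<exists>R. symmetric_mat R \<and> invertible R \<and> R ** R = M"
proof -
  obtain U :: "real^'n^'n" and d where U: "transpose U ** U = mat 1"
    "M = U ** diag d ** transpose U" "\<forall>j. d j = column j U \<bullet> (M *v column j U)"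
    using spectral assms pd_def by blast
  have dpos: "d j > 0" for j
  proof -
    have "column j U \<noteq> 0" using col_norm[OF U(1), of j] by auto
    thus ?thesis using assms U(3) unfolding pd_def by auto
  qed
  define R where "R = U ** diag (\<lambda>j. sqrt (d j)) ** transpose U"
  let ?D = "diag (\<lambda>j. sqrt (d j))"
  have "R ** R = U ** (?D ** ((transpose U ** U) ** (?D ** transpose U)))"
    by (simp add: R_def matrix_mul_assoc)
  also have "\<dots> = U ** ((?D ** ?D) ** transpose U)" using U(1) by (simp add: matrix_mul_assoc)
  also have "?D ** ?D = diag d"
  proof -
    have "(\<lambda>j. sqrt (d j) * sqrt (d j)) = d" using dpos by (simp add: fun_eq_iff less_imp_le)
    thus ?thesis by (simp add: diag_mult)
  qed
  also have "U ** (diag d ** transpose U) = U ** diag d ** transpose U" by (simp add: matrix_mul_assoc)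
  finally have RR: "R ** R = M" using U(2) by simp
  have sR: "symmetric_mat R"
    by (simp add: symmetric_mat_def R_def matrix_transpose_mul transpose_diag matrix_mul_assoc)
  have "det R = prod (\<lambda>j. sqrt (d j)) UNIV" using det_conj[OF U(1)] det_diag R_def by metis
  also have "\<dots> > 0" using dpos by (simp add: prod_pos)
  finally have "invertible R" using invertible_det_nz by force
  thus ?thesis using sR RR by blast
qed

lemma pd_inv: "pd (X::real^'n^'n) \<Longrightarrow> pd (matrix_inv X)"
proof -
  assume pX: "pd X"
  have iX: "invertible X" using pX pd_invertible by blast
  have "x \<bullet> (matrix_inv X *v x) > 0" if "x \<noteq> 0" for x
  proof -
    let ?y = "matrix_inv X *v x"
    have xy: "X *v ?y = x" by (simp add: matrix_vector_mul_assoc inv_props[OF iX])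
    hence "?y \<noteq> 0" using that by auto
    hence "?y \<bullet> (X *v ?y) > 0" using pX pd_def by blast
    thus ?thesis using xy by (simp add: inner_commute)
  qed
  thus ?thesis using sym_inv[OF iX] pX pd_def by blast
qed

lemma det_mono_psd:
  fixes X N :: "real^'n^'n"
  assumes pX: "pd X" and pN: "psd N"
  shows "det X \<le> det (X + N)"
proof -
  obtain R where R: "symmetric_mat R" "invertible R" "R ** R = X" using pd_sqrt[OF pX] by blast
  define Ri where "Ri = matrix_inv R"
  have Ri: "R ** Ri = mat 1" "Ri ** R = mat 1" using inv_props[OF R(2)] Ri_def by auto
  have sRi: "symmetric_mat Ri" using sym_inv[OF R(2) R(1)] Ri_def by simp
  define K where "K = Ri ** N ** Ri"
  have "R ** (mat 1 + K) ** R = R ** R + (R ** Ri) ** N ** (Ri ** R)"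
    by (simp add: K_def matrix_add_ldistrib mm_add_r matrix_mul_assoc)
  also have "\<dots> = X + N" using Ri R(3) by simp
  finally have eq: "X + N = R ** (mat 1 + K) ** R" by simp
  have pK: "psd K"
  proof -
    have "symmetric_mat K" using sRi pN
      by (simp add: K_def symmetric_mat_def psd_def matrix_transpose_mul matrix_mul_assoc)
    moreover have "0 \<le> x \<bullet> (K *v x)" for x
    proof -
      have "x \<bullet> (K *v x) = (Ri *v x) \<bullet> (N *v (Ri *v x))"
        using sym_inner[OF sRi] by (simp add: K_def matrix_vector_mul_assoc[symmetric])
      thus ?thesis using pN unfolding psd_def by metis
    qed
    ultimately show ?thesis by (simp add: psd_def)
  qed
  have "det (X + N) = det R * det (mat 1 + K) * det R" using eq by (simp add: det_mul)
  moreover have "det X = det R * det R" using R(3) by (metis det_mul)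
  moreover have "det (mat 1 + K) \<ge> 1" using pK by (rule det_I_plus_psd)
  moreover have "det R * det R \<ge> 0" by simp
  ultimately show ?thesis by (metis mult.commute mult.left_commute mult_left_mono mult_1)
qed

lemma det_mono:
  fixes X Y :: "real^'n^'n"
  assumes "pd X" "loewner_le X Y"
  shows "det X \<le> det Y"
  using det_mono_psd[OF assms(1), of "Y - X"] assms(2) by (simp add: loewner_le_def)



lemma inner_mv': "x \<bullet> (A *v w) = (transpose A *v x) \<bullet> (w::real^'n)"
  using inner_mv[of "transpose A" x w] by (simp only: transpose_transpose)

lemma quad_congr:
  fixes A :: "real^'k^'n" and N :: "real^'k^'k" and x :: "real^'n"
  shows "x \<bullet> ((A ** N ** transpose A) *v x) = (transpose A *v x) \<bullet> (N *v (transpose A *v x))"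
proof -
  have "(A ** N ** transpose A) *v x = A *v (N *v (transpose A *v x))"
    by (simp only: matrix_vector_mul_assoc matrix_mul_assoc)
  thus ?thesis using inner_mv'[of x A "N *v (transpose A *v x)"] by simp
qed

lemma sym_congr: "symmetric_mat N \<Longrightarrow> symmetric_mat (A ** N ** transpose A)"
  by (simp add: symmetric_mat_def matrix_transpose_mul matrix_mul_assoc)

lemma sym_add: "symmetric_mat A \<Longrightarrow> symmetric_mat B \<Longrightarrow> symmetric_mat (A + B)"
  by (simp add: symmetric_mat_def transpose_add)
lemma sym_diff: "symmetric_mat A \<Longrightarrow> symmetric_mat B \<Longrightarrow> symmetric_mat (A - B)"
  by (simp add: symmetric_mat_def transpose_diff)
lemma sym_scale: "symmetric_mat A \<Longrightarrow> symmetric_mat (c *\<^sub>R A)"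
  by (simp add: symmetric_mat_def transpose_scalar)
lemma sym_I: "symmetric_mat (mat 1)"
  by (simp add: symmetric_mat_def)

lemma psd_congr: "psd N \<Longrightarrow> psd (A ** N ** transpose A)"
  unfolding psd_def by (simp add: sym_congr quad_congr)

lemma psd_add: "psd A \<Longrightarrow> psd B \<Longrightarrow> psd (A + B)"
  unfolding psd_def by (simp add: sym_add matrix_vector_mult_add_rdistrib inner_add_right add_nonneg_nonneg)

lemma psd_scale: "c \<ge> 0 \<Longrightarrow> psd A \<Longrightarrow> psd (c *\<^sub>R A)"
  unfolding psd_def by (simp add: sym_scale scaleR_matrix_vector_assoc[symmetric])

lemma psd_zero: "psd (0::real^'n^'n)"
  by (simp add: psd_def symmetric_mat_def transpose_def vec_eq_iff)

lemma pd_psd: "pd A \<Longrightarrow> psd A"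
  unfolding pd_def psd_def by (metis inner_zero_left order_refl less_imp_le)

lemma pd_add_psd: "pd A \<Longrightarrow> psd B \<Longrightarrow> pd (A + B)"
  unfolding pd_def psd_def by (simp add: sym_add matrix_vector_mult_add_rdistrib inner_add_right add_pos_nonneg)

lemma loewner_refl: "loewner_le X X"
  by (simp add: loewner_le_def psd_zero)

lemma loewner_trans: "loewner_le X Y \<Longrightarrow> loewner_le Y Z \<Longrightarrow> loewner_le X Z"
  unfolding loewner_le_def using psd_add[of "Y - X" "Z - Y"] by simp

lemma loewner_pd: "pd X \<Longrightarrow> loewner_le X Y \<Longrightarrow> pd Y"
  unfolding loewner_le_def using pd_add_psd[of X "Y - X"] by simp

lemma loewner_add: "loewner_le X Y \<Longrightarrow> loewner_le U V \<Longrightarrow> loewner_le (X + U) (Y + V)"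
  unfolding loewner_le_def using psd_add[of "Y - X" "V - U"] by (simp add: algebra_simps)

lemma loewner_congr: "loewner_le X Y \<Longrightarrow> loewner_le (A ** X ** transpose A) (A ** Y ** transpose A)"
  unfolding loewner_le_def using psd_congr[of "Y - X" A] by (simp add: mm_diff_l mm_diff_r)

lemma loewner_scale: "c \<ge> 0 \<Longrightarrow> loewner_le X Y \<Longrightarrow> loewner_le (c *\<^sub>R X) (c *\<^sub>R Y)"
  unfolding loewner_le_def using psd_scale[of c "Y - X"] by (simp add: scaleR_diff_right)

lemma pd_scale: "c > 0 \<Longrightarrow> pd A \<Longrightarrow> pd (c *\<^sub>R A)"
  unfolding pd_def by (simp add: sym_scale scaleR_matrix_vector_assoc[symmetric])

lemma loewner_quad: "loewner_le X Y \<Longrightarrow> x \<bullet> (X *v x) \<le> x \<bullet> (Y *v x)"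
  unfolding loewner_le_def psd_def by (metis diff_ge_0_iff_ge inner_diff_right matrix_vector_mult_diff_rdistrib)

lemma loewnerI: "symmetric_mat X \<Longrightarrow> symmetric_mat Y \<Longrightarrow> (\<And>x. x \<bullet> (X *v x) \<le> x \<bullet> (Y *v x)) \<Longrightarrow> loewner_le X Y"
  unfolding loewner_le_def psd_def
  by (simp add: sym_diff matrix_vector_mult_diff_rdistrib inner_diff_right)

lemma psd_sym: "psd A \<Longrightarrow> symmetric_mat A" by (simp add: psd_def)
lemma pd_sym: "pd A \<Longrightarrow> symmetric_mat A" by (simp add: pd_def)

lemma psd_sqrt:
  fixes M :: "real^'n^'n"
  assumes "psd M"
  shows "\<exists>R. symmetric_mat R \<and> R ** R = M"
proof -
  obtain U :: "real^'n^'n" and d where U: "transpose U ** U = mat 1"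
    "M = U ** diag d ** transpose U" "\<forall>j. d j = column j U \<bullet> (M *v column j U)"
    using spectral assms psd_def by blast
  have dpos: "d j \<ge> 0" for j using assms U(3) unfolding psd_def by auto
  define R where "R = U ** diag (\<lambda>j. sqrt (d j)) ** transpose U"
  let ?D = "diag (\<lambda>j. sqrt (d j))"
  have "R ** R = U ** (?D ** ((transpose U ** U) ** (?D ** transpose U)))"
    by (simp add: R_def matrix_mul_assoc)
  also have "\<dots> = U ** ((?D ** ?D) ** transpose U)" using U(1) by (simp add: matrix_mul_assoc)
  also have "?D ** ?D = diag d"
  proof -
    have "(\<lambda>j. sqrt (d j) * sqrt (d j)) = d" using dpos by (simp add: fun_eq_iff)
    thus ?thesis by (simp add: diag_mult)
  qed
  also have "U ** (diag d ** transpose U) = U ** diag d ** transpose U" by (simp add: matrix_mul_assoc)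
  finally have RR: "R ** R = M" using U(2) by simp
  have sR: "symmetric_mat R"
    by (simp add: symmetric_mat_def R_def matrix_transpose_mul transpose_diag matrix_mul_assoc)
  thus ?thesis using RR by blast
qed

lemma cauchy_psd:
  assumes "psd (Q::real^'n^'n)"
  shows "(u \<bullet> (Q *v v))\<^sup>2 \<le> (u \<bullet> (Q *v u)) * (v \<bullet> (Q *v v))"
proof -
  obtain R where R: "symmetric_mat R" "R ** R = Q" using psd_sqrt[OF assms] by blast
  have e: "a \<bullet> (Q *v b) = (R *v a) \<bullet> (R *v b)" for a b
    using sym_inner[OF R(1), of a "R *v b"] R(2) by (simp add: matrix_vector_mul_assoc)
  show ?thesis unfolding e by (rule Cauchy_Schwarz_ineq)
qed

lemma schur_bound:
  fixes A Q M :: "real^'n^'n"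
  assumes pQ: "pd Q" and pM: "pd M" and le: "loewner_le (A ** Q ** transpose A) M"
  shows "loewner_le (transpose A ** matrix_inv M ** A) (matrix_inv Q)"
proof (rule loewnerI)
  have iM: "invertible M" and iQ: "invertible Q" using pM pQ pd_invertible by auto
  have sMi: "symmetric_mat (matrix_inv M)" using sym_inv[OF iM] pM pd_def by blast
  have pMi: "pd (matrix_inv M)" using pd_inv[OF pM] .
  have pQi: "pd (matrix_inv Q)" using pd_inv[OF pQ] .
  show "symmetric_mat (transpose A ** matrix_inv M ** A)"
    using sym_congr[OF sMi, of "transpose A"] by simp
  show "symmetric_mat (matrix_inv Q)" using pQi pd_def by blast
  fix x
  define y where "y = matrix_inv M *v (A *v x)"
  define u where "u = transpose A *v y"
  define a where "a = x \<bullet> ((transpose A ** matrix_inv M ** A) *v x)"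
  have a1: "a = (A *v x) \<bullet> y"
  proof -
    have "(transpose A ** matrix_inv M ** A) *v x = transpose A *v (matrix_inv M *v (A *v x))"
      by (simp only: matrix_vector_mul_assoc matrix_mul_assoc)
    hence "a = x \<bullet> (transpose A *v y)" unfolding a_def y_def by simp
    thus ?thesis using inner_mv[of A x y] by simp
  qed
  have a2: "a = u \<bullet> x"
  proof -
    have "(A *v x) \<bullet> y = x \<bullet> (transpose A *v y)" by (rule inner_mv)
    thus ?thesis using a1 unfolding u_def by (metis inner_commute)
  qed
  have My: "M *v y = A *v x" unfolding y_def by (simp add: matrix_vector_mul_assoc matrix_mul_assoc inv_props[OF iM])
  have a3: "y \<bullet> (M *v y) = a" using a1 My by (simp add: inner_commute)
  have a0: "a \<ge> 0" using pMi a1 unfolding y_def pd_def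
    by (metis inner_commute inner_zero_left order.refl less_imp_le)
  have "u \<bullet> (Q *v u) = y \<bullet> ((A ** Q ** transpose A) *v y)" unfolding u_def by (simp add: quad_congr)
  also have "\<dots> \<le> y \<bullet> (M *v y)" using le by (rule loewner_quad)
  finally have uQu: "u \<bullet> (Q *v u) \<le> a" using a3 by simp
  let ?v = "matrix_inv Q *v x"
  have Qv: "Q *v ?v = x" by (simp add: matrix_vector_mul_assoc inv_props[OF iQ])
  have "a\<^sup>2 = (u \<bullet> (Q *v ?v))\<^sup>2" using a2 Qv by simp
  also have "\<dots> \<le> (u \<bullet> (Q *v u)) * (?v \<bullet> (Q *v ?v))" using cauchy_psd pd_psd[OF pQ] by blast
  also have "?v \<bullet> (Q *v ?v) = x \<bullet> (matrix_inv Q *v x)" using Qv by (simp add: inner_commute)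
  also have "(u \<bullet> (Q *v u)) * (x \<bullet> (matrix_inv Q *v x)) \<le> a * (x \<bullet> (matrix_inv Q *v x))"
  proof (rule mult_right_mono[OF uQu])
    show "0 \<le> x \<bullet> (matrix_inv Q *v x)" using pd_psd[OF pQi] psd_def by blast
  qed
  finally have "a * a \<le> a * (x \<bullet> (matrix_inv Q *v x))" by (simp add: power2_eq_square)
  hence "a \<le> x \<bullet> (matrix_inv Q *v x) \<or> a = 0" using a0
    by (metis less_eq_real_def mult_le_cancel_left_pos)
  moreover have "0 \<le> x \<bullet> (matrix_inv Q *v x)" using pd_psd[OF pQi] psd_def by blast
  ultimately show "x \<bullet> ((transpose A ** matrix_inv M ** A) *v x) \<le> x \<bullet> (matrix_inv Q *v x)"
    using a_def by auto
qed



section \<open>Block matrices\<close>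

lemma mv_neg: "(A::real^'n^'m) *v (- x) = - (A *v x)"
  by (simp add: vec_eq_iff matrix_vector_mult_def sum_negf)

definition join :: "real^'n \<Rightarrow> real^'n \<Rightarrow> real^('n + 'n)" where
  "join x y = (\<chi> k. case k of Inl i \<Rightarrow> x $ i | Inr i \<Rightarrow> y $ i)"

lemma sum_plus_univ:
  "sum g (UNIV :: ('n::finite + 'n) set) = (\<Sum>i\<in>UNIV. g (Inl i)) + (\<Sum>i\<in>UNIV. g (Inr i))"
proof -
  have "sum g (UNIV :: ('n + 'n) set) = sum g (UNIV <+> UNIV)" by (simp only: UNIV_Plus_UNIV)
  also have "\<dots> = (\<Sum>i\<in>UNIV. g (Inl i)) + (\<Sum>i\<in>UNIV. g (Inr i))"
    by (subst sum.Plus) (simp_all add: comp_def)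
  finally show ?thesis .
qed

lemma join_inner: "join a b \<bullet> join c d = a \<bullet> c + b \<bullet> d"
  by (simp add: inner_vec_def sum_plus_univ join_def)

lemma join_proj: "z = join (\<chi> i. z $ Inl i) (\<chi> i. z $ Inr i)"
  by (simp add: join_def vec_eq_iff split: sum.split)

lemma block_mv:
  "block_mat B11 B12 B21 B22 *v join x y = join (B11 *v x + B12 *v y) (B21 *v x + B22 *v y)"
  by (simp add: vec_eq_iff join_def block_mat_def matrix_vector_mult_def sum_plus_univ split: sum.split)

lemma block_quad:
  "join x y \<bullet> (block_mat B11 B12 B21 B22 *v join x y) =
   x \<bullet> (B11 *v x) + x \<bullet> (B12 *v y) + y \<bullet> (B21 *v x) + y \<bullet> (B22 *v y)"
  by (simp add: block_mv join_inner inner_add_right)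

lemma block_transpose:
  "transpose (block_mat B11 B12 B21 B22) = block_mat (transpose B11) (transpose B21) (transpose B12) (transpose B22)"
  by (simp add: vec_eq_iff block_mat_def transpose_def split: sum.split)

lemma block_psdI:
  assumes "symmetric_mat B11" "symmetric_mat B22" "transpose B21 = B12"
    and "\<And>x y. 0 \<le> x \<bullet> (B11 *v x) + x \<bullet> (B12 *v y) + y \<bullet> (B21 *v x) + y \<bullet> (B22 *v y)"
  shows "psd (block_mat B11 B12 B21 B22)"
proof -
  have "transpose B12 = B21" using assms(3) by (metis transpose_transpose)
  hence "symmetric_mat (block_mat B11 B12 B21 B22)"
    using assms(1-3) by (simp add: symmetric_mat_def block_transpose)
  moreover have "0 \<le> z \<bullet> (block_mat B11 B12 B21 B22 *v z)" for z
    using assms(4) block_quad join_proj by metis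
  ultimately show ?thesis by (simp add: psd_def)
qed

lemma block_psdD:
  assumes "psd (block_mat B11 B12 B21 B22)"
  shows "0 \<le> x \<bullet> (B11 *v x) + x \<bullet> (B12 *v y) + y \<bullet> (B21 *v x) + y \<bullet> (B22 *v y)"
  using assms block_quad unfolding psd_def by metis

section \<open>Schur complement / Woodbury\<close>

locale schur_ctx =
  fixes A W P :: "real^'n^'n"
  assumes pW: "pd W" and pP: "pd P"
begin

definition "S = A ** P ** transpose A + W"
definition "Si = matrix_inv S"
definition "Pst = P - P ** transpose A ** Si ** A ** P"
definition "G = matrix_inv P + transpose A ** matrix_inv W ** A"

lemma sP: "symmetric_mat P" using pP pd_def by blast
lemma sW: "symmetric_mat W" using pW pd_def by blast
lemma iP: "invertible P" using pP pd_invertible by blast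
lemma iW: "invertible W" using pW pd_invertible by blast

lemma pS: "pd S"
proof -
  have "psd (A ** P ** transpose A)" by (rule psd_congr[OF pd_psd[OF pP]])
  hence "pd (W + A ** P ** transpose A)" using pd_add_psd[OF pW] by blast
  thus ?thesis by (simp add: S_def add.commute)
qed
lemma sS: "symmetric_mat S" using pS pd_def by blast
lemma iS: "invertible S" using pS pd_invertible by blast
lemma sSi: "symmetric_mat Si" unfolding Si_def using sym_inv[OF iS sS] .
lemma SSi: "S ** Si = mat 1" "Si ** S = mat 1" using inv_props[OF iS] Si_def by auto

lemma pG: "pd G"
proof -
  have "psd (transpose A ** matrix_inv W ** transpose (transpose A))"
    by (rule psd_congr[OF pd_psd[OF pd_inv[OF pW]]])
  thus ?thesis unfolding G_def using pd_add_psd[OF pd_inv[OF pP]] by simp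
qed

lemma key: "Si ** (A ** P ** transpose A) ** matrix_inv W = matrix_inv W - Si"
proof -
  have "A ** P ** transpose A = S - W" by (simp add: S_def)
  hence "Si ** (A ** P ** transpose A) = Si ** S - Si ** W" by (simp add: mm_diff_l)
  hence "Si ** (A ** P ** transpose A) ** matrix_inv W = Si ** S ** matrix_inv W - Si ** W ** matrix_inv W"
    by (simp add: mm_diff_r)
  also have "Si ** S ** matrix_inv W = matrix_inv W" using SSi by simp
  also have "Si ** W ** matrix_inv W = Si" using inv_props[OF iW] by (simp add: matrix_mul_assoc[symmetric])
  finally show ?thesis .
qed

lemma woodbury: "Pst ** G = mat 1"
proof -
  let ?Wi = "matrix_inv W" and ?Pm = "matrix_inv P" and ?At = "transpose A"
  have e1: "P ** ?Pm = mat 1" using inv_props[OF iP] by simp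
  have "Pst ** G = P ** ?Pm + P ** ?At ** ?Wi ** A - P ** ?At ** Si ** A ** (P ** ?Pm)
         - P ** ?At ** Si ** A ** P ** ?At ** ?Wi ** A"
    unfolding Pst_def G_def by (simp add: mm_diff_r matrix_add_ldistrib matrix_mul_assoc)
  also have "P ** ?At ** Si ** A ** P ** ?At ** ?Wi ** A = P ** ?At ** (Si ** (A ** P ** ?At) ** ?Wi) ** A"
    by (simp add: matrix_mul_assoc)
  also have "\<dots> = P ** ?At ** (?Wi - Si) ** A" by (simp only: key)
  also have "\<dots> = P ** ?At ** ?Wi ** A - P ** ?At ** Si ** A"
    by (simp add: mm_diff_l mm_diff_r)
  finally show ?thesis using e1 by simp
qed

lemma Pst_inv: "Pst = matrix_inv G" and pPst: "pd Pst"
proof -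
  have "G ** Pst = mat 1" using woodbury matrix_left_right_inverse by blast
  hence "matrix_inv G = Pst" by (rule inv_unique)
  thus "Pst = matrix_inv G" by simp
  thus "pd Pst" using pd_inv[OF pG] by simp
qed

lemma det_Pst: "det Pst * det S = det P * det W"
proof -
  let ?Wi = "matrix_inv W" and ?Pm = "matrix_inv P" and ?At = "transpose A"
  have iG: "invertible G" using pG pd_invertible by blast
  have dG: "det G \<noteq> 0" using iG invertible_det_nz by blast
  have "G ** P = mat 1 + ?At ** (?Wi ** A ** P)"
    unfolding G_def using inv_props[OF iP] by (simp add: mm_add_r matrix_mul_assoc)
  hence h1: "det G * det P = det (mat 1 + (?Wi ** A ** P) ** ?At)"
    using sylvester[of ?At "?Wi ** A ** P"] by (simp add: det_mul[symmetric])
  have "W ** (mat 1 + (?Wi ** A ** P) ** ?At) = S"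
    unfolding S_def using inv_props[OF iW]
    by (simp add: matrix_add_ldistrib matrix_mul_assoc add.commute)
  hence h2: "det W * det (mat 1 + (?Wi ** A ** P) ** ?At) = det S" by (metis det_mul)
  have "det S = det W * det G * det P" by (metis h1 h2 mult.assoc)
  moreover have "det Pst = 1 / det G" using Pst_inv det_inv[OF iG] by simp
  ultimately show ?thesis using dG by simp
qed

lemma sPst: "symmetric_mat Pst" using pPst pd_def by blast

lemma quad_PASAP:
  "x \<bullet> ((P ** transpose A ** Si ** A ** P) *v x) = ((A ** P) *v x) \<bullet> (Si *v ((A ** P) *v x))"
proof -
  have "P ** transpose A = transpose (A ** P)" using sP by (simp add: matrix_transpose_mul symmetric_mat_def)
  hence "P ** transpose A ** Si ** A ** P = transpose (A ** P) ** Si ** transpose (transpose (A ** P))"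
    by (simp add: matrix_mul_assoc)
  thus ?thesis using quad_congr[of x "transpose (A ** P)" Si] by simp
qed

lemma feasible_le:
  assumes sPi: "symmetric_mat Pm" and blk: "psd (block_mat (P - Pm) (P ** transpose A) (A ** P) S)"
  shows "loewner_le Pm Pst"
proof (rule loewnerI[OF sPi sPst])
  fix x
  let ?w = "(A ** P) *v x"
  let ?y = "- (Si *v ?w)"
  have "0 \<le> x \<bullet> ((P - Pm) *v x) + x \<bullet> ((P ** transpose A) *v ?y) + ?y \<bullet> ((A ** P) *v x) + ?y \<bullet> (S *v ?y)"
    by (rule block_psdD[OF blk])
  moreover have "x \<bullet> ((P ** transpose A) *v ?y) = ?w \<bullet> ?y"
  proof -
    have "P ** transpose A = transpose (A ** P)" using sP by (simp add: matrix_transpose_mul symmetric_mat_def)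
    thus ?thesis using inner_mv[of "A ** P" x ?y] by simp
  qed
  moreover have "?y \<bullet> (S *v ?y) = ?w \<bullet> (Si *v ?w)"
  proof -
    have "S *v (Si *v ?w) = ?w" by (simp add: matrix_vector_mul_assoc matrix_mul_assoc SSi)
    thus ?thesis by (simp add: mv_neg inner_commute)
  qed
  ultimately have "0 \<le> x \<bullet> ((P - Pm) *v x) - ?w \<bullet> (Si *v ?w)"
    by (simp add: inner_commute)
  moreover have "x \<bullet> (Pst *v x) = x \<bullet> (P *v x) - ?w \<bullet> (Si *v ?w)"
    unfolding Pst_def by (simp add: matrix_vector_mult_diff_rdistrib inner_diff_right quad_PASAP)
  ultimately show "x \<bullet> (Pm *v x) \<le> x \<bullet> (Pst *v x)"
    by (simp add: matrix_vector_mult_diff_rdistrib inner_diff_right)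
qed

lemma Pst_block: "psd (block_mat (P - Pst) (P ** transpose A) (A ** P) S)"
proof (rule block_psdI)
  show "symmetric_mat (P - Pst)" using sym_diff[OF sP sPst] .
  show "symmetric_mat S" by (rule sS)
  show "transpose (A ** P) = P ** transpose A" using sP by (simp add: matrix_transpose_mul symmetric_mat_def)
  fix x y
  let ?w = "(A ** P) *v x"
  have e1: "x \<bullet> ((P - Pst) *v x) = ?w \<bullet> (Si *v ?w)"
    unfolding Pst_def by (simp add: quad_PASAP)
  have e2: "x \<bullet> ((P ** transpose A) *v y) = ?w \<bullet> y"
  proof -
    have "P ** transpose A = transpose (A ** P)" using sP by (simp add: matrix_transpose_mul symmetric_mat_def)
    thus ?thesis using inner_mv[of "A ** P" x y] by simp
  qed
  let ?v = "Si *v ?w + y"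
  have SSiw: "S *v (Si *v ?w) = ?w" by (simp add: matrix_vector_mul_assoc matrix_mul_assoc SSi)
  have "?v \<bullet> (S *v ?v) = (Si *v ?w) \<bullet> ?w + (Si *v ?w) \<bullet> (S *v y) + y \<bullet> ?w + y \<bullet> (S *v y)"
    by (simp add: matrix_vector_right_distrib inner_add_left inner_add_right SSiw)
  also have "(Si *v ?w) \<bullet> (S *v y) = ?w \<bullet> y"
    using sym_inner[OF sS, of "Si *v ?w" y] SSiw by simp
  finally have "?v \<bullet> (S *v ?v) = ?w \<bullet> (Si *v ?w) + ?w \<bullet> y + y \<bullet> ?w + y \<bullet> (S *v y)"
    using sym_inner[OF sSi, of ?w ?w] by (simp add: inner_commute)
  moreover have "0 \<le> ?v \<bullet> (S *v ?v)" using pd_psd[OF pS] psd_def by blast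
  ultimately show "0 \<le> x \<bullet> ((P - Pst) *v x) + x \<bullet> ((P ** transpose A) *v y) + y \<bullet> ((A ** P) *v x) + y \<bullet> (S *v y)"
    using e1 e2 by (simp add: inner_commute)
qed

lemma Pst_feasible:
  assumes "loewner_le P S"
  shows "(P, Pst) \<in> feasible A W"
  using assms sP sPst pPst Pst_block unfolding feasible_def S_def by auto

end



lemma pd_I: "pd (mat 1 :: real^'n^'n)"
  by (simp add: pd_def sym_I)

lemma increment:
  fixes A Q W D :: "real^'n^'n"
  assumes pQ: "pd Q" and pW: "pd W" and pD: "psd D"
  defines "M \<equiv> A ** Q ** transpose A + W"
  shows "det (M + A ** D ** transpose A) * det Q \<le> det (Q + D) * det M"
proof -
  interpret schur_ctx A W Q by unfold_locales (fact pW, fact pQ)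
  have pM: "pd M" using pS S_def M_def by simp
  have iM: "invertible M" and iQ: "invertible Q" using pM pQ pd_invertible by auto
  let ?Mi = "matrix_inv M" and ?Qi = "matrix_inv Q" and ?At = "transpose A"
  obtain R where R: "symmetric_mat R" "R ** R = D" using psd_sqrt[OF pD] by blast
  have tR: "transpose R = R" using R(1) symmetric_mat_def by blast
  define G where "G = ?At ** ?Mi ** A"
  have leMQ: "loewner_le (A ** Q ** ?At) M"
    unfolding M_def loewner_le_def using pd_psd[OF pW] by simp
  have GQ: "loewner_le G ?Qi" unfolding G_def by (rule schur_bound[OF pQ pM leMQ])
  have pG: "psd G" unfolding G_def
    using psd_congr[OF pd_psd[OF pd_inv[OF pM]], of ?At] by simp
  have "M + A ** D ** ?At = M ** (mat 1 + ?Mi ** (A ** D ** ?At))"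
    using inv_props[OF iM] by (simp add: matrix_add_ldistrib matrix_mul_assoc)
  hence "det (M + A ** D ** ?At) = det M * det (mat 1 + (?Mi ** A ** D) ** ?At)"
    by (simp add: det_mul matrix_mul_assoc)
  also have "det (mat 1 + (?Mi ** A ** D) ** ?At) = det (mat 1 + ?At ** (?Mi ** A ** D))"
    by (rule sylvester)
  also have "?At ** (?Mi ** A ** D) = (G ** R) ** R" by (simp add: G_def matrix_mul_assoc R(2)[symmetric])
  also have "det (mat 1 + (G ** R) ** R) = det (mat 1 + R ** (G ** R))" by (rule sylvester)
  finally have L: "det (M + A ** D ** ?At) = det M * det (mat 1 + R ** G ** transpose R)"
    using tR by (simp add: matrix_mul_assoc)
  have "Q + D = Q ** (mat 1 + ?Qi ** D)"
    using inv_props[OF iQ] by (simp add: matrix_add_ldistrib matrix_mul_assoc)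
  hence "det (Q + D) = det Q * det (mat 1 + (?Qi ** R) ** R)"
    by (simp add: det_mul matrix_mul_assoc R(2)[symmetric])
  also have "det (mat 1 + (?Qi ** R) ** R) = det (mat 1 + R ** (?Qi ** R))" by (rule sylvester)
  finally have Rt: "det (Q + D) = det Q * det (mat 1 + R ** ?Qi ** transpose R)"
    using tR by (simp add: matrix_mul_assoc)
  have p1: "pd (mat 1 + R ** G ** transpose R)" using pd_add_psd[OF pd_I psd_congr[OF pG]] .
  have "loewner_le (mat 1 + R ** G ** transpose R) (mat 1 + R ** ?Qi ** transpose R)"
    by (intro loewner_add loewner_refl loewner_congr GQ)
  hence dle: "det (mat 1 + R ** G ** transpose R) \<le> det (mat 1 + R ** ?Qi ** transpose R)"
    using det_mono p1 by blast
  have "det M > 0" "det Q > 0" using det_pd_pos pM pQ by auto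
  hence "det M * det (mat 1 + R ** G ** transpose R) * det Q \<le> det M * det (mat 1 + R ** ?Qi ** transpose R) * det Q"
    using dle by (simp add: mult_right_mono)
  thus ?thesis using L Rt by (simp add: mult_ac)
qed

lemma eps_exists:
  fixes W1 W2 :: "real^'n^'n"
  assumes pW1: "pd W1" and sW2: "symmetric_mat W2"
  shows "\<exists>e. 0 < e \<and> e \<le> 1 \<and> loewner_le (e *\<^sub>R W2) W1"
proof -
  let ?q = "\<lambda>x. x \<bullet> (W1 *v x)"
  obtain i :: 'n where True by blast
  have ne: "sphere (0::real^'n) 1 \<noteq> {}"
  proof -
    have "axis i 1 \<in> sphere (0::real^'n) 1" by simp
    thus ?thesis by blast
  qed
  have cq: "continuous_on (sphere 0 1) ?q"
    by (intro continuous_intros continuous_on_inner linear_continuous_on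
        matrix_vector_mul_bounded_linear)
  obtain u where u: "u \<in> sphere 0 1" "\<And>y. y \<in> sphere 0 1 \<Longrightarrow> ?q u \<le> ?q y"
    using continuous_attains_inf[OF compact_sphere ne cq] by blast
  define m where "m = ?q u"
  have "u \<noteq> 0" using u(1) by auto
  hence m0: "m > 0" using pW1 unfolding m_def pd_def by blast
  have mb: "m * (norm x)\<^sup>2 \<le> ?q x" for x
  proof (cases "x = 0")
    case False
    define c where "c = 1 / norm x"
    have "c *\<^sub>R x \<in> sphere 0 1" using False by (simp add: c_def)
    hence "m \<le> ?q (c *\<^sub>R x)" using u(2) m_def by blast
    moreover have "?q (c *\<^sub>R x) = c * c * ?q x"
      by (simp only: matrix_vector_mult_scaleR inner_scaleR_left inner_scaleR_right mult.assoc)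
    ultimately have "(norm x)\<^sup>2 * m \<le> (norm x)\<^sup>2 * (c * c * ?q x)"
      by (metis mult_left_mono zero_le_power2)
    moreover have "norm x * c = 1" using False c_def by simp
    hence "(norm x)\<^sup>2 * (c * c * ?q x) = ?q x"
      by (simp add: power2_eq_square) (metis mult.assoc mult.left_commute mult_1)
    ultimately show ?thesis by (simp add: mult.commute)
  qed simp
  obtain K where K: "K > 0" "\<And>x. norm (W2 *v x) \<le> norm x * K"
    using bounded_linear.pos_bounded[OF matrix_vector_mul_bounded_linear[of W2]] by blast
  define e where "e = min 1 (m / K)"
  have e0: "e > 0" "e \<le> 1" using m0 K by (auto simp: e_def)
  have "x \<bullet> ((e *\<^sub>R W2) *v x) \<le> x \<bullet> (W1 *v x)" for x
  proof -
    have "x \<bullet> ((e *\<^sub>R W2) *v x) = e * (x \<bullet> (W2 *v x))"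
      by (simp add: scaleR_matrix_vector_assoc[symmetric])
    also have "\<dots> \<le> e * (norm x * norm (W2 *v x))"
      using e0 by (intro mult_left_mono) (auto intro: order_trans[OF abs_ge_self Cauchy_Schwarz_ineq2])
    also have "\<dots> \<le> e * (norm x * (norm x * K))"
      using e0 K by (intro mult_left_mono) auto
    also have "\<dots> = (e * K) * (norm x)\<^sup>2" by (simp add: power2_eq_square mult_ac)
    also have "\<dots> \<le> m * (norm x)\<^sup>2"
    proof (rule mult_right_mono)
      have "e \<le> m / K" by (simp add: e_def)
      thus "e * K \<le> m" using K by (simp add: field_simps)
    qed simp
    also have "\<dots> \<le> x \<bullet> (W1 *v x)" by (rule mb)
    finally show ?thesis .
  qed
  hence "loewner_le (e *\<^sub>R W2) W1"
    using sym_scale[OF sW2] pW1 pd_def by (intro loewnerI) auto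
  thus ?thesis using e0 by blast
qed

lemma ereal_avg:
  fixes V :: ereal
  assumes "\<And>k. V \<le> ereal (a k)" and "\<And>N. (\<Sum>k<N. a k) \<le> real N * b + c"
  shows "V \<le> ereal b"
proof (cases V rule: ereal_cases)
  case (real v)
  have "v \<le> b"
  proof (rule ccontr)
    assume "\<not> v \<le> b"
    hence "v - b > 0" by simp
    then obtain N :: nat where N: "c < real N * (v - b)" using reals_Archimedean3 by blast
    have "(\<Sum>k<N. v) \<le> (\<Sum>k<N. a k)" using assms(1) real by (intro sum_mono) simp
    hence "real N * v \<le> real N * b + c" using assms(2)[of N] by simp
    thus False using N by (simp add: algebra_simps)
  qed
  thus ?thesis using real by simp
next
  case PInf thus ?thesis using assms(1)[of 0] by simp
qed simp



lemma g_mono: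
  "loewner_le X Y \<Longrightarrow> loewner_le W W' \<Longrightarrow>
   loewner_le (A ** X ** transpose A + W) (A ** Y ** transpose A + W')"
  by (intro loewner_add loewner_congr)

lemma iter_props:
  fixes A W Xs :: "real^'n^'n"
  assumes "pd Xs" "loewner_le Xs (A ** Xs ** transpose A + W)"
  shows "pd (((\<lambda>X. A ** X ** transpose A + W) ^^ k) Xs) \<and>
    loewner_le (((\<lambda>X. A ** X ** transpose A + W) ^^ k) Xs)
      (A ** (((\<lambda>X. A ** X ** transpose A + W) ^^ k) Xs) ** transpose A + W)"
proof (induction k)
  case 0 thus ?case using assms by simp
next
  case (Suc k)
  let ?g = "\<lambda>X. A ** X ** transpose A + W"
  have "pd ((?g ^^ Suc k) Xs)" using Suc loewner_pd by auto
  moreover have "loewner_le ((?g ^^ Suc k) Xs) (?g ((?g ^^ Suc k) Xs))"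
    using Suc g_mono[of "(?g ^^ k) Xs" "?g ((?g ^^ k) Xs)" W W A] loewner_refl by auto
  ultimately show ?case by simp
qed

lemma iter_cmp:
  fixes A W1 W2 Xs Y0 :: "real^'n^'n"
  assumes "loewner_le Xs Y0" "loewner_le W1 W2"
  shows "loewner_le (((\<lambda>X. A ** X ** transpose A + W1) ^^ k) Xs) (((\<lambda>X. A ** X ** transpose A + W2) ^^ k) Y0)"
  by (induction k) (use assms g_mono in auto)

lemma log_det_mono:
  "pd X \<Longrightarrow> loewner_le X Y \<Longrightarrow> log 2 (det X) \<le> log 2 (det Y)"
  using det_mono det_pd_pos loewner_pd by (metis log_le_cancel_iff one_less_numeral_iff semiring_norm(76))

theorem lemma12:
  fixes A W1 W2 :: "real^'n^'n"
  assumes "pd W1" and "loewner_le W1 W2"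
  shows "vstar A W1 \<le> vstar A W2"
proof -
  note pW1 = assms(1) and W12 = assms(2)
  have pW2: "pd W2" using loewner_pd pW1 W12 by blast
  have sW2: "symmetric_mat W2" using pW2 pd_def by blast
  define L where "L X = log 2 (det X)" for X :: "real^'n^'n"
  define obj where "obj W PP = (1/2) * log 2 (det (matrix_inv (snd PP))) + (1/2) * log 2 (det W)"
    for W :: "real^'n^'n" and PP :: "(real^'n^'n) \<times> (real^'n^'n)"
  have vs: "vstar A W = (INF PP\<in>feasible A W. ereal (obj W PP))" for W
    by (simp add: vstar_def obj_def)
  define g1 where "g1 X = A ** X ** transpose A + W1" for X
  define g2 where "g2 X = A ** X ** transpose A + W2" for X
  have g1e: "g1 = (\<lambda>X. A ** X ** transpose A + W1)" by (simp add: g1_def fun_eq_iff)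
  have g2e: "g2 = (\<lambda>X. A ** X ** transpose A + W2)" by (simp add: g2_def fun_eq_iff)
  show ?thesis unfolding vs[of W2]
  proof (rule INF_greatest)
    fix PP assume PP: "PP \<in> feasible A W2"
    obtain P Pm where PPe: "PP = (P, Pm)" by fastforce
    have sP: "symmetric_mat P" and sPm: "symmetric_mat Pm" and pPm: "pd Pm"
      and Ple: "loewner_le P (A ** P ** transpose A + W2)"
      and blk: "psd (block_mat (P - Pm) (P ** transpose A) (A ** P) (A ** P ** transpose A + W2))"
      using PP PPe unfolding feasible_def by auto
    have "psd (P - Pm)"
    proof -
      have "0 \<le> x \<bullet> ((P - Pm) *v x)" for x
        using block_psdD[OF blk, of x 0] by simp
      thus ?thesis using sym_diff[OF sP sPm] psd_def by blast
    qed
    hence "pd (Pm + (P - Pm))" by (rule pd_add_psd[OF pPm])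
    hence pP: "pd P" by simp
    interpret c2: schur_ctx A W2 P by unfold_locales (fact pW2, fact pP)
    have S2: "c2.S = g2 P" by (simp add: c2.S_def g2_def)
    have "loewner_le Pm c2.Pst" using c2.feasible_le[OF sPm] blk unfolding c2.S_def by simp
    hence dPm: "det Pm \<le> det c2.Pst" using det_mono pPm by blast
    have dPm0: "det Pm > 0" using det_pd_pos pPm by blast
    have dP0: "det P > 0" using det_pd_pos pP by blast
    have dW20: "det W2 > 0" using det_pd_pos pW2 by blast
    have dS20: "det c2.S > 0" using det_pd_pos c2.pS by blast
    have dPst: "det c2.Pst = det P * det W2 / det c2.S" using c2.det_Pst dS20 by (simp add: field_simps)
    define b where "b = (1/2) * (L (g2 P) - L P)"
    have objb: "b \<le> obj W2 PP"
    proof -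
      have iPm: "invertible Pm" using pPm pd_invertible by blast
      have "obj W2 PP = (1/2) * (- log 2 (det Pm)) + (1/2) * L W2"
        using PPe det_inv[OF iPm] by (simp add: obj_def L_def log_recip)
      moreover have "log 2 (det Pm) \<le> log 2 (det c2.Pst)" using dPm dPm0 by simp
      moreover have "log 2 (det c2.Pst) = L P + L W2 - L (g2 P)"
        using dPst dP0 dW20 dS20 S2 by (simp add: L_def log_mult log_divide)
      ultimately show ?thesis unfolding b_def by simp
    qed
    obtain e where e: "0 < e" "e \<le> 1" "loewner_le (e *\<^sub>R W2) W1" using eps_exists[OF pW1 sW2] by blast
    define Q where "Q k = (g2 ^^ k) P" for k
    define P1 where "P1 k = (g1 ^^ k) (e *\<^sub>R P)" for k
    have Qp: "pd (Q k) \<and> loewner_le (Q k) (g2 (Q k))" for k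
      using iter_props[OF pP Ple, of k] unfolding Q_def g2e by simp
    have P10: "loewner_le (e *\<^sub>R P) (g1 (e *\<^sub>R P))"
    proof -
      have "A ** (e *\<^sub>R P) ** transpose A = e *\<^sub>R (A ** P ** transpose A)"
        by (simp add: mm_scale_l mm_scale_r)
      hence "g1 (e *\<^sub>R P) = e *\<^sub>R (A ** P ** transpose A) + W1" by (simp add: g1_def)
      moreover have "loewner_le (e *\<^sub>R P) (e *\<^sub>R (A ** P ** transpose A) + e *\<^sub>R W2)"
        using loewner_scale[OF _ Ple, of e] e by (simp add: scaleR_add_right)
      moreover have "loewner_le (e *\<^sub>R (A ** P ** transpose A) + e *\<^sub>R W2) (e *\<^sub>R (A ** P ** transpose A) + W1)"
        using loewner_add[OF loewner_refl e(3)] .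
      ultimately show ?thesis using loewner_trans by metis
    qed
    have pP10: "pd (e *\<^sub>R P)" using pd_scale[OF e(1) pP] .
    have P1p: "pd (P1 k) \<and> loewner_le (P1 k) (g1 (P1 k))" for k
      using iter_props[where Xs = "e *\<^sub>R P" and A = A and W = W1 and k = k] pP10 P10 unfolding P1_def g1e by simp
    have eP: "loewner_le (e *\<^sub>R P) P"
    proof -
      have "P - e *\<^sub>R P = (1 - e) *\<^sub>R P" by (simp add: algebra_simps)
      thus ?thesis using psd_scale[of "1 - e" P] e pd_psd[OF pP] by (simp add: loewner_le_def)
    qed
    have QS: "Q (Suc k) = g2 (Q k)" for k by (simp add: Q_def)
    have P1S: "P1 (Suc k) = g1 (P1 k)" for k by (simp add: P1_def)
    have PQ: "loewner_le (P1 k) (Q k)" for k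
    proof (induction k)
      case 0 show ?case using eP by (simp add: P1_def Q_def)
    next
      case (Suc k) show ?case
        unfolding P1S QS g1_def g2_def by (rule g_mono[OF Suc.IH W12])
    qed
    have inc: "L (Q (Suc (Suc k))) - L (Q (Suc k)) \<le> L (Q (Suc k)) - L (Q k)" for k
    proof -
      have pk: "pd (Q k)" and lek: "loewner_le (Q k) (Q (Suc k))" using Qp QS by auto
      have pD: "psd (Q (Suc k) - Q k)" using lek loewner_le_def by blast
      have "det (g2 (Q k) + A ** (Q (Suc k) - Q k) ** transpose A) * det (Q k)
            \<le> det (Q k + (Q (Suc k) - Q k)) * det (g2 (Q k))"
        using increment[OF pk pW2 pD, of A] by (simp add: g2_def)
      moreover have "g2 (Q k) + A ** (Q (Suc k) - Q k) ** transpose A = Q (Suc (Suc k))"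
        using QS[of "Suc k"] QS[of k] by (simp add: g2_def mm_diff_l mm_diff_r)
      ultimately have "det (Q (Suc (Suc k))) * det (Q k) \<le> det (Q (Suc k)) * det (Q (Suc k))"
        using QS[of k] by simp
      moreover have "det (Q j) > 0" for j using Qp det_pd_pos by blast
      ultimately have "log 2 (det (Q (Suc (Suc k))) * det (Q k)) \<le> log 2 (det (Q (Suc k)) * det (Q (Suc k)))"
        by simp
      moreover have "det (Q (Suc (Suc k))) \<noteq> 0" "det (Q (Suc k)) \<noteq> 0" "det (Q k) \<noteq> 0"
        using Qp det_pd_pos by (metis less_irrefl)+
      ultimately show ?thesis by (simp add: L_def log_mult)
    qed
    have inc1: "L (Q (Suc k)) - L (Q k) \<le> L (Q 1) - L (Q 0)" for k
    proof (induction k)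
      case (Suc k) thus ?case using inc[of k] by simp
    qed simp
    have Qbound: "L (Q N) \<le> L (Q 0) + real N * (L (Q 1) - L (Q 0))" for N
    proof (induction N)
      case (Suc N) thus ?case using inc1[of N] by (simp add: algebra_simps)
    qed simp
    define a where "a k = (1/2) * (L (P1 (Suc k)) - L (P1 k))" for k
    have Va: "vstar A W1 \<le> ereal (a k)" for k
    proof -
      have pk: "pd (P1 k)" and lek: "loewner_le (P1 k) (g1 (P1 k))" using P1p by auto
      interpret c1: schur_ctx A W1 "P1 k" by unfold_locales (fact pW1, fact pk)
      have S1: "c1.S = P1 (Suc k)" by (simp add: c1.S_def g1_def P1S)
      have fe: "(P1 k, c1.Pst) \<in> feasible A W1"
        using c1.Pst_feasible lek S1 P1S by simp
      have dP0: "det (P1 k) > 0" using det_pd_pos pk by blast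
      have dW10: "det W1 > 0" using det_pd_pos pW1 by blast
      have dS0: "det c1.S > 0" using det_pd_pos c1.pS by blast
      have iPst: "invertible c1.Pst" using c1.pPst pd_invertible by blast
      have dPst: "det c1.Pst = det (P1 k) * det W1 / det c1.S" using c1.det_Pst dS0 by (simp add: field_simps)
      have "obj W1 (P1 k, c1.Pst) = (1/2) * (- log 2 (det c1.Pst)) + (1/2) * L W1"
        using det_inv[OF iPst] by (simp add: obj_def L_def log_recip)
      also have "log 2 (det c1.Pst) = L (P1 k) + L W1 - L (P1 (Suc k))"
        using dPst dP0 dW10 dS0 S1 by (simp add: L_def log_mult log_divide)
      finally have "obj W1 (P1 k, c1.Pst) = a k" by (simp add: a_def algebra_simps)
      moreover have "vstar A W1 \<le> ereal (obj W1 (P1 k, c1.Pst))"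
        unfolding vs[of W1] using fe by (rule INF_lower)
      ultimately show ?thesis by simp
    qed
    have suma: "(\<Sum>k<N. a k) \<le> real N * b + (1/2) * (L P - L (P1 0))" for N
    proof -
      have "(\<Sum>k<N. a k) = (1/2) * (\<Sum>k<N. L (P1 (Suc k)) - L (P1 k))"
        by (simp add: a_def sum_distrib_left)
      also have "(\<Sum>k<N. L (P1 (Suc k)) - L (P1 k)) = L (P1 N) - L (P1 0)"
        by (rule sum_lessThan_telescope)
      also have "L (P1 N) \<le> L (Q N)"
        unfolding L_def using log_det_mono P1p PQ by blast
      hence "(1/2) * (L (P1 N) - L (P1 0)) \<le> (1/2) * (L (Q N) - L (P1 0))" by simp
      also have "\<dots> \<le> (1/2) * (L (Q 0) + real N * (L (Q 1) - L (Q 0)) - L (P1 0))"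
        using Qbound[of N] by simp
      also have "\<dots> = real N * b + (1/2) * (L P - L (P1 0))"
        by (simp add: b_def Q_def algebra_simps)
      finally show ?thesis .
    qed
    have "vstar A W1 \<le> ereal b" by (rule ereal_avg[OF Va suma])
    also have "ereal b \<le> ereal (obj W2 PP)" using objb by simp
    finally show "vstar A W1 \<le> ereal (obj W2 PP)" .
  qed
qed

end
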